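(* (a) A proposition $p$ of QHC is semi-stable if and only if it is stable. (b) A problem $\alpha$ of QHC is semi-decidable if and only if the proposition $?\alpha$ is semi-decidable.
   Context: QHC is a two-sorted first-order calculus. Its only terms are individual variables. Every formula is either a problem (denoted by Greek letters $\alpha,\beta,\gamma,\dots$) or a proposition (denoted by Latin letters $p,q,\dots$). Atomic formulas are proposition variables $p(t_1,\dots,t_n)$ (of proposition type), problem variables $\pi(t_1,\dots,t_n)$ (of problem type), and the constants $0$ (a proposition, classical falsity) and $\bot$ (a problem, intuitionistic absurdity). Propositions are closed under the classical connectives $\land,\lor,\to$ and quantifiers $\exists,\forall$; problems are closed under the intuitionistic connectives $\land,\lor,\to$ and quantifiers $\exists,\forall$ (the same symbols are used, distinguished by the type of the arguments). $\neg p$ abbreviates $p\to 0$, $\neg\alpha$ abbreviates $\alpha\to\bot$, and $\leftrightarrow$ is defined as usual. There are two type-conversion operators: if $p$ is a proposition then $!p$ is a problem, and if $\alpha$ is a problem then $?\alpha$ is a proposition. Deductive system of QHC: all axioms and rules of classical predicate logic applied to all propositions; all postulates and rules of intuitionistic predicate logic applied to all problems; the rules $p\,/\,!p$ and $\alpha\,/\,?\alpha$; and the schemas $?!p\to p$; $\alpha\to\, !?\alpha$; $!(p\to q)\to(!p\to !q)$; $?(\alpha\to\beta)\to(?\alpha\to ?\beta)$; $!0\to\bot$; $?(\alpha\land\beta)\leftrightarrow ?\alpha\land ?\beta$; $?(\alpha\lor\beta)\leftrightarrow ?\alpha\lor ?\beta$; $?\bot\to 0$; $?\exists x\,\alpha(x)\leftrightarrow\exists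 x\,?\alpha(x)$; $?\forall x\,\alpha(x)\to\forall x\,?\alpha(x)$ (usual variable side conditions implicit). $\vdash A$ means $A$ is derivable in QHC; $A\Rightarrow B$ means $\vdash A\to B$ and $A\Leftrightarrow B$ means $\vdash A\leftrightarrow B$ (with $A,B$ of the same type); $A\vdash B$ means $B$ is derivable in QHC from the premise $A$. Notation: $\Box p := ?!p$ (a proposition) and $\nabla\alpha := !?\alpha$ (a problem). QC and QH denote classical and intuitionistic predicate calculus. A proposition $p$ is stable if $\neg !\neg p\Rightarrow\, !p$, and semi-stable if $\vdash ?(\neg !\neg p\to !p)$; $p$ is semi-decidable if $\vdash ?(!p\lor !\neg p)$. A problem $\alpha$ is semi-decidable if $\vdash ?(\alpha\lor\neg\alpha)$. *)

theory Defs
  imports Main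
begin

text \<open>Terms are individual variables, represented by de Bruijn indices (nat).
  Quantifiers bind index 0. Atomic formulas: proposition variables
  p(t1,...,tn) = PAtom p ts, problem variables pi(t1,...,tn) = QAtom pi ts,
  the proposition 0 (Zero) and the problem bottom (Bot).
  Bang p is !p, Why a is ?a.\<close>

datatype prp =
    PAtom nat "nat list"
  | Zero
  | PAnd prp prp
  | POr prp prp
  | PImp prp prp
  | PEx prp
  | PAll prp
  | Why prb
and prb =
    QAtom nat "nat list"
  | Bot
  | QAnd prb prb
  | QOr prb prb
  | QImp prb prb
  | QEx prb
  | QAll prb
  | Bang prp

text \<open>Renaming of variables (the only terms are variables, so
  substitution of a term for a variable is a renaming).\<close>

definition up :: "(nat \<Rightarrow> nat) \<Rightarrow> nat \<Rightarrow> nat" where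
  "up f i = (case i of 0 \<Rightarrow> 0 | Suc j \<Rightarrow> Suc (f j))"

primrec renp :: "(nat \<Rightarrow> nat) \<Rightarrow> prp \<Rightarrow> prp"
and renq :: "(nat \<Rightarrow> nat) \<Rightarrow> prb \<Rightarrow> prb" where
  "renp f (PAtom n ts) = PAtom n (map f ts)"
| "renp f Zero = Zero"
| "renp f (PAnd a b) = PAnd (renp f a) (renp f b)"
| "renp f (POr a b) = POr (renp f a) (renp f b)"
| "renp f (PImp a b) = PImp (renp f a) (renp f b)"
| "renp f (PEx a) = PEx (renp (up f) a)"
| "renp f (PAll a) = PAll (renp (up f) a)"
| "renp f (Why a) = Why (renq f a)"
| "renq f (QAtom n ts) = QAtom n (map f ts)"
| "renq f Bot = Bot"
| "renq f (QAnd a b) = QAnd (renq f a) (renq f b)"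
| "renq f (QOr a b) = QOr (renq f a) (renq f b)"
| "renq f (QImp a b) = QImp (renq f a) (renq f b)"
| "renq f (QEx a) = QEx (renq (up f) a)"
| "renq f (QAll a) = QAll (renq (up f) a)"
| "renq f (Bang p) = Bang (renp f p)"

text \<open>Instantiation of the bound variable 0 by the variable t, and lifting
  (shifting all free variables, used for the eigenvariable conditions).\<close>

definition inst :: "nat \<Rightarrow> nat \<Rightarrow> nat" where
  "inst t i = (case i of 0 \<Rightarrow> t | Suc j \<Rightarrow> j)"

abbreviation "instp t a \<equiv> renp (inst t) a"
abbreviation "instq t a \<equiv> renq (inst t) a"
abbreviation "liftp a \<equiv> renp Suc a"
abbreviation "liftq a \<equiv> renq Suc a"

definition PNeg :: "prp \<Rightarrow> prp" where "PNeg p = PImp p Zero"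
definition QNeg :: "prb \<Rightarrow> prb" where "QNeg a = QImp a Bot"
definition PIff :: "prp \<Rightarrow> prp \<Rightarrow> prp" where "PIff p q = PAnd (PImp p q) (PImp q p)"
definition QIff :: "prb \<Rightarrow> prb \<Rightarrow> prb" where "QIff a b = QAnd (QImp a b) (QImp b a)"

text \<open>Hilbert-style: classical predicate logic
  on propositions, intuitionistic predicate logic on problems, plus the
  conversion rules and schemas of QHC.\<close>

inductive pder :: "prp \<Rightarrow> bool" and qder :: "prb \<Rightarrow> bool" where
  pK: "pder (PImp a (PImp b a))"
| pS: "pder (PImp (PImp a (PImp b c)) (PImp (PImp a b) (PImp a c)))"
| pAndE1: "pder (PImp (PAnd a b) a)"
| pAndE2: "pder (PImp (PAnd a b) b)"
| pAndI: "pder (PImp a (PImp b (PAnd a b)))"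
| pOrI1: "pder (PImp a (POr a b))"
| pOrI2: "pder (PImp b (POr a b))"
| pOrE: "pder (PImp (PImp a c) (PImp (PImp b c) (PImp (POr a b) c)))"
| pEfq: "pder (PImp Zero a)"
| pDne: "pder (PImp (PImp (PImp a Zero) Zero) a)"
| pAllE: "pder (PImp (PAll a) (instp t a))"
| pExI: "pder (PImp (instp t a) (PEx a))"
| pMP: "pder (PImp a b) \<Longrightarrow> pder a \<Longrightarrow> pder b"
| pAllI: "pder (PImp (liftp b) a) \<Longrightarrow> pder (PImp b (PAll a))"
| pExE: "pder (PImp a (liftp b)) \<Longrightarrow> pder (PImp (PEx a) b)"
| qK: "qder (QImp a (QImp b a))"
| qS: "qder (QImp (QImp a (QImp b c)) (QImp (QImp a b) (QImp a c)))"
| qAndE1: "qder (QImp (QAnd a b) a)"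
| qAndE2: "qder (QImp (QAnd a b) b)"
| qAndI: "qder (QImp a (QImp b (QAnd a b)))"
| qOrI1: "qder (QImp a (QOr a b))"
| qOrI2: "qder (QImp b (QOr a b))"
| qOrE: "qder (QImp (QImp a c) (QImp (QImp b c) (QImp (QOr a b) c)))"
| qEfq: "qder (QImp Bot a)"
| qAllE: "qder (QImp (QAll a) (instq t a))"
| qExI: "qder (QImp (instq t a) (QEx a))"
| qMP: "qder (QImp a b) \<Longrightarrow> qder a \<Longrightarrow> qder b"
| qAllI: "qder (QImp (liftq b) a) \<Longrightarrow> qder (QImp b (QAll a))"
| qExE: "qder (QImp a (liftq b)) \<Longrightarrow> qder (QImp (QEx a) b)"
| bangR: "pder p \<Longrightarrow> qder (Bang p)"
| whyR: "qder a \<Longrightarrow> pder (Why a)"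
| whyBang: "pder (PImp (Why (Bang p)) p)"
| bangWhy: "qder (QImp a (Bang (Why a)))"
| bangImp: "qder (QImp (Bang (PImp p q)) (QImp (Bang p) (Bang q)))"
| whyImp: "pder (PImp (Why (QImp a b)) (PImp (Why a) (Why b)))"
| bangZero: "qder (QImp (Bang Zero) Bot)"
| whyAnd: "pder (PIff (Why (QAnd a b)) (PAnd (Why a) (Why b)))"
| whyOr: "pder (PIff (Why (QOr a b)) (POr (Why a) (Why b)))"
| whyBot: "pder (PImp (Why Bot) Zero)"
| whyEx: "pder (PIff (Why (QEx a)) (PEx (Why a)))"
| whyAll: "pder (PImp (Why (QAll a)) (PAll (Why a)))"

definition stable :: "prp \<Rightarrow> bool" where
  "stable p \<longleftrightarrow> qder (QImp (QNeg (Bang (PNeg p))) (Bang p))"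

definition semi_stable :: "prp \<Rightarrow> bool" where
  "semi_stable p \<longleftrightarrow> pder (Why (QImp (QNeg (Bang (PNeg p))) (Bang p)))"

definition semi_decidable_prop :: "prp \<Rightarrow> bool" where
  "semi_decidable_prop p \<longleftrightarrow> pder (Why (QOr (Bang p) (Bang (PNeg p))))"

definition semi_decidable_prob :: "prb \<Rightarrow> bool" where
  "semi_decidable_prob a \<longleftrightarrow> pder (Why (QOr a (QNeg a)))"

end

theory Submission
  imports Defs
begin

lemmas R = pder_qder.intros

lemma p_trans: "pder (PImp a b) \<Longrightarrow> pder (PImp b c) \<Longrightarrow> pder (PImp a c)"
  by (meson R(2) R(1) R(13))
lemma q_trans: "qder (QImp a b) \<Longrightarrow> qder (QImp b c) \<Longrightarrow> qder (QImp a c)"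
  by (meson R(17) R(16) R(27))
lemma p_mono_r: "pder (PImp b c) \<Longrightarrow> pder (PImp (PImp a b) (PImp a c))"
  by (meson R(2) R(1) R(13))
lemma q_mono_r: "qder (QImp b c) \<Longrightarrow> qder (QImp (QImp a b) (QImp a c))"
  by (meson R(17) R(16) R(27))
lemma q_mp_under: "qder (QImp x (QImp y z)) \<Longrightarrow> qder y \<Longrightarrow> qder (QImp x z)"
  by (meson R(17) R(16) R(27))
lemma q_mono_l: "qder (QImp a b) \<Longrightarrow> qder (QImp (QImp b c) (QImp a c))"
proof -
  assume h: "qder (QImp a b)"
  have "qder (QImp (QImp b c) (QImp a (QImp b c)))" by (rule R(16))
  then have "qder (QImp (QImp b c) (QImp (QImp a b) (QImp a c)))"
    using q_trans R(17) by blast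
  then show ?thesis using q_mp_under h by blast
qed
lemma p_or_mono: "pder (PImp a c) \<Longrightarrow> pder (PImp b d) \<Longrightarrow> pder (PImp (POr a b) (POr c d))"
  by (meson R(8) R(6) R(7) R(13) p_trans)
lemma q_or_mono: "qder (QImp a c) \<Longrightarrow> qder (QImp b d) \<Longrightarrow> qder (QImp (QOr a b) (QOr c d))"
  by (meson R(23) R(21) R(22) R(27) q_trans)
lemma iff1: "pder (PIff a b) \<Longrightarrow> pder (PImp a b)"
  unfolding PIff_def by (meson R(3) R(13))
lemma iff2: "pder (PIff a b) \<Longrightarrow> pder (PImp b a)"
  unfolding PIff_def by (meson R(4) R(13))
lemma why_mono: "qder (QImp a b) \<Longrightarrow> pder (PImp (Why a) (Why b))"
  by (meson R(31) whyImp R(13))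
lemma bang_mono: "pder (PImp p q) \<Longrightarrow> qder (QImp (Bang p) (Bang q))"
  by (meson R(30) bangImp R(27))

lemma partA: "semi_stable p \<longleftrightarrow> stable p"
proof
  assume "semi_stable p"
  then have h: "pder (Why (QImp (QNeg (Bang (PNeg p))) (Bang p)))" by (simp add: semi_stable_def)
  let ?A = "QNeg (Bang (PNeg p))"
  have "pder (PImp (Why ?A) (Why (Bang p)))" using h whyImp R(13) by blast
  then have "pder (PImp (Why ?A) p)" using p_trans whyBang by blast
  then have "qder (QImp (Bang (Why ?A)) (Bang p))" by (rule bang_mono)
  then have "qder (QImp ?A (Bang p))" using q_trans bangWhy by blast
  then show "stable p" by (simp add: stable_def)
next
  assume "stable p" then show "semi_stable p"
    by (simp add: stable_def semi_stable_def R(31))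
qed

lemma partB: "semi_decidable_prob a \<longleftrightarrow> semi_decidable_prop (Why a)"
proof
  assume "semi_decidable_prob a"
  then have h: "pder (Why (QOr a (QNeg a)))" by (simp add: semi_decidable_prob_def)
  have "pder (PImp (Why (QImp a Bot)) (PImp (Why a) (Why Bot)))" by (rule whyImp)
  moreover have "pder (PImp (PImp (Why a) (Why Bot)) (PImp (Why a) Zero))"
    using p_mono_r whyBot by blast
  ultimately have "pder (PImp (Why (QNeg a)) (PNeg (Why a)))"
    unfolding QNeg_def PNeg_def using p_trans by blast
  then have "qder (QImp (Bang (Why (QNeg a))) (Bang (PNeg (Why a))))" by (rule bang_mono)
  then have n: "qder (QImp (QNeg a) (Bang (PNeg (Why a))))" using q_trans bangWhy by blast
  have "qder (QImp (QOr a (QNeg a)) (QOr (Bang (Why a)) (Bang (PNeg (Why a)))))"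
    using q_or_mono[OF bangWhy n] .
  then have "pder (PImp (Why (QOr a (QNeg a))) (Why (QOr (Bang (Why a)) (Bang (PNeg (Why a))))))"
    by (rule why_mono)
  then show "semi_decidable_prop (Why a)" using h R(13) by (simp add: semi_decidable_prop_def)
next
  assume "semi_decidable_prop (Why a)"
  then have h: "pder (Why (QOr (Bang (Why a)) (Bang (PNeg (Why a)))))"
    by (simp add: semi_decidable_prop_def)
  have "qder (QImp (Bang (PImp (Why a) Zero)) (QImp (Bang (Why a)) (Bang Zero)))" by (rule bangImp)
  moreover have "qder (QImp (QImp (Bang (Why a)) (Bang Zero)) (QImp (Bang (Why a)) Bot))"
    using q_mono_r bangZero by blast
  moreover have "qder (QImp (QImp (Bang (Why a)) Bot) (QImp a Bot))"
    using q_mono_l bangWhy by blast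
  ultimately have "qder (QImp (Bang (PNeg (Why a))) (QNeg a))"
    unfolding PNeg_def QNeg_def using q_trans by blast
  then have n: "pder (PImp (Why (Bang (PNeg (Why a)))) (Why (QNeg a)))" by (rule why_mono)
  have "pder (PImp (POr (Why (Bang (Why a))) (Why (Bang (PNeg (Why a))))) (POr (Why a) (Why (QNeg a))))"
    using p_or_mono[OF whyBang n] .
  then have "pder (PImp (Why (QOr (Bang (Why a)) (Bang (PNeg (Why a))))) (Why (QOr a (QNeg a))))"
    using p_trans iff1[OF whyOr] iff2[OF whyOr] by blast
  then show "semi_decidable_prob a" using h R(13) by (simp add: semi_decidable_prob_def)
qed

theorem proposition2p24:
  shows "(\<forall>p. semi_stable p \<longleftrightarrow> stable p) \<and>
         (\<forall>a. semi_decidable_prob a \<longleftrightarrow> semi_decidable_prop (Why a))"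
  using partA partB by blast

end
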